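(* Let $\mathcal{H}$ be a complex Hilbert space. Then $w_{\Omega}(T) = \sqrt{2}\,w(T)$ for all $T\in\mathbb{B}(\mathcal{H})$.
   Context: $\mathbb{B}(\mathcal{H})$ is the algebra of bounded linear operators on $\mathcal{H}$, $\|\cdot\|$ the usual operator norm, and $w(T)=\sup\{|\langle Tx,x\rangle|:\|x\|=1\}$ the numerical radius. Dragomir's norm is $\Omega(T)=\sup\{\|\zeta T+\eta T^*\|:\ \zeta,\eta\in\mathbb{C},\ |\zeta|^2+|\eta|^2\le 1\}$. For $A\in\mathbb{B}(\mathcal{H})$, ${\rm Re}(A)=\frac{A+A^*}{2}$, and $w_\Omega(T)=\sup_{\theta\in\mathbb{R}}\Omega\big({\rm Re}(e^{i\theta}T)\big)$. *)

theory Defs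
  imports "HOL-Analysis.Analysis"
begin

text \<open>A complex Hilbert space: a real Hilbert space (real inner product space that is
complete) carrying a compatible complex scalar multiplication whose norm is absolutely
homogeneous for complex scalars.  The complex inner product is then determined by the
real one (see cinner below).\<close>

class complex_hilbert = real_inner + complete_space +
  fixes scaleC :: "complex \<Rightarrow> 'a \<Rightarrow> 'a"
  assumes scaleC_add_right: "scaleC a (x + y) = scaleC a x + scaleC a y"
    and scaleC_add_left: "scaleC (a + b) x = scaleC a x + scaleC b x"
    and scaleC_scaleC: "scaleC a (scaleC b x) = scaleC (a * b) x"
    and scaleC_one: "scaleC 1 x = x"
    and scaleC_of_real: "scaleC (complex_of_real r) x = scaleR r x"
    and norm_scaleC: "norm (scaleC a x) = cmod a * norm x"

text \<open>Complex inner product, linear in the first argument, conjugate linear in the second,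
with real part the real inner product.\<close>
definition cinner :: "'a::complex_hilbert \<Rightarrow> 'a \<Rightarrow> complex" where
  "cinner x y = complex_of_real (inner x y) + \<i> * complex_of_real (inner x (scaleC \<i> y))"

definition bounded_op :: "('a::complex_hilbert \<Rightarrow> 'a) \<Rightarrow> bool" where
  "bounded_op T \<longleftrightarrow>
     (\<forall>x y. T (x + y) = T x + T y) \<and>
     (\<forall>c x. T (scaleC c x) = scaleC c (T x)) \<and>
     (\<exists>K. \<forall>x. norm (T x) \<le> K * norm x)"

definition hadjoint :: "('a::complex_hilbert \<Rightarrow> 'a) \<Rightarrow> ('a \<Rightarrow> 'a)" where
  "hadjoint T = (SOME S. \<forall>x y. cinner (T x) y = cinner x (S y))"

text \<open>Operator norm is the library onorm.  Numerical radius (sup over the unit sphere;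
the insert 0 only fixes the convention sup of the empty set = 0 for the zero space,
all values being nonnegative).\<close>
definition numrad :: "('a::complex_hilbert \<Rightarrow> 'a) \<Rightarrow> real" where
  "numrad T = Sup (insert 0 ((\<lambda>x. cmod (cinner (T x) x)) ` {x. norm x = 1}))"

definition ReOp :: "('a::complex_hilbert \<Rightarrow> 'a) \<Rightarrow> ('a \<Rightarrow> 'a)" where
  "ReOp A = (\<lambda>x. scaleC (1/2) (A x + hadjoint A x))"

definition dragomir :: "('a::complex_hilbert \<Rightarrow> 'a) \<Rightarrow> real" where
  "dragomir T = (SUP p \<in> {(\<zeta>, \<eta>). (cmod \<zeta>)\<^sup>2 + (cmod \<eta>)\<^sup>2 \<le> 1}.
      onorm (\<lambda>x. scaleC (fst p) (T x) + scaleC (snd p) (hadjoint T x)))"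

definition w_Omega :: "('a::complex_hilbert \<Rightarrow> 'a) \<Rightarrow> real" where
  "w_Omega T = (SUP \<theta> \<in> (UNIV::real set).
      dragomir (ReOp (\<lambda>x. scaleC (exp (\<i> * complex_of_real \<theta>)) (T x))))"

end

theory Submission
  imports Defs
begin

lemma scaleC_zero_right[simp]: "scaleC c (0::'a::complex_hilbert) = 0"
  by (metis add_cancel_right_right scaleC_add_right)

lemma scaleC_minus_right: "scaleC c (- (x::'a::complex_hilbert)) = - scaleC c x"
  by (metis add.right_inverse add_eq_0_iff scaleC_add_right scaleC_zero_right)

lemma scaleC_diff_right: "scaleC c ((x::'a::complex_hilbert) - y) = scaleC c x - scaleC c y"
  by (metis diff_conv_add_uminus scaleC_add_right scaleC_minus_right)

lemma scaleC_decomp: "scaleC c (x::'a::complex_hilbert) = Re c *\<^sub>R x + Im c *\<^sub>R scaleC \<i> x"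
proof -
  have "c = complex_of_real (Re c) + complex_of_real (Im c) * \<i>"
    by (simp add: complex_eq_iff)
  then have "scaleC c x = scaleC (complex_of_real (Re c)) x + scaleC (complex_of_real (Im c)) (scaleC \<i> x)"
    by (metis scaleC_add_left scaleC_scaleC)
  then show ?thesis by (simp add: scaleC_of_real)
qed

lemma scaleC_ii: "scaleC \<i> (scaleC \<i> x) = - (x::'a::complex_hilbert)"
proof -
  have "scaleC \<i> (scaleC \<i> x) = scaleC (complex_of_real (-1)) x" by (simp add: scaleC_scaleC)
  then show ?thesis using scaleC_of_real[of "-1" x] by simp
qed

lemma scaleC_scaleR_comm: "scaleC c (r *\<^sub>R (x::'a::complex_hilbert)) = r *\<^sub>R scaleC c x"
  by (metis mult.commute scaleC_of_real scaleC_scaleC)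

lemma norm_scaleC_i[simp]: "norm (scaleC \<i> (x::'a::complex_hilbert)) = norm x"
  by (simp add: norm_scaleC)

lemma inner_ii: "inner (scaleC \<i> x) (scaleC \<i> y) = inner x (y::'a::complex_hilbert)"
proof -
  have "scaleC \<i> x + scaleC \<i> y = scaleC \<i> (x + y)" by (simp add: scaleC_add_right)
  then show ?thesis
    by (metis dot_norm norm_scaleC_i)
qed

lemma inner_i_left: "inner (scaleC \<i> x) y = - inner x (scaleC \<i> (y::'a::complex_hilbert))"
  by (metis inner_ii inner_minus_left scaleC_ii)

lemma Re_cinner: "Re (cinner x y) = inner x y"
  by (simp add: cinner_def)

lemma Im_cinner: "Im (cinner x y) = inner x (scaleC \<i> y)"
  by (simp add: cinner_def)

lemma cinner_cmod_le: "cmod (cinner x y) \<le> norm x * norm (y::'a::complex_hilbert)"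
proof -
  define p where "p = inner x y"
  define q where "q = inner x (scaleC \<i> y)"
  have cm: "cmod (cinner x y) = sqrt (p\<^sup>2 + q\<^sup>2)"
    by (simp add: cmod_def p_def q_def Re_cinner Im_cinner)
  have "inner x (p *\<^sub>R y + q *\<^sub>R scaleC \<i> y) = p\<^sup>2 + q\<^sup>2"
    by (simp add: inner_simps p_def q_def power2_eq_square)
  moreover have "p *\<^sub>R y + q *\<^sub>R scaleC \<i> y = scaleC (Complex p q) y"
    by (simp add: scaleC_decomp[of "Complex p q" y])
  moreover have "norm (scaleC (Complex p q) y) = sqrt (p\<^sup>2 + q\<^sup>2) * norm y"
    by (simp add: norm_scaleC cmod_def)
  ultimately have "p\<^sup>2 + q\<^sup>2 \<le> norm x * (sqrt (p\<^sup>2 + q\<^sup>2) * norm y)"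
    by (metis Cauchy_Schwarz_ineq2 abs_le_D1)
  moreover have "sqrt (p\<^sup>2 + q\<^sup>2) * sqrt (p\<^sup>2 + q\<^sup>2) = p\<^sup>2 + q\<^sup>2"
    by simp
  ultimately have h: "sqrt (p\<^sup>2 + q\<^sup>2) * sqrt (p\<^sup>2 + q\<^sup>2) \<le> sqrt (p\<^sup>2 + q\<^sup>2) * (norm x * norm y)"
    by (simp add: algebra_simps)
  have "sqrt (p\<^sup>2 + q\<^sup>2) \<le> norm x * norm y"
  proof (cases "sqrt (p\<^sup>2 + q\<^sup>2) = 0")
    case True then show ?thesis by simp
  next
    case False
    then have "sqrt (p\<^sup>2 + q\<^sup>2) > 0" by (metis real_sqrt_ge_zero add_nonneg_nonneg zero_le_power2 order_le_less)
    then show ?thesis using h by (metis mult_le_cancel_left_pos)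
  qed
  then show ?thesis using cm by simp
qed

lemma cinner_scaleC_left: "cinner (scaleC c x) y = c * cinner x (y::'a::complex_hilbert)"
proof -
  have a: "inner (scaleC c x) y = Re c * inner x y - Im c * inner x (scaleC \<i> y)"
    by (simp add: scaleC_decomp[of c x] inner_add_left inner_i_left)
  have b: "inner (scaleC c x) (scaleC \<i> y) = Re c * inner x (scaleC \<i> y) + Im c * inner x y"
    by (simp add: scaleC_decomp[of c x] inner_add_left inner_ii)
  show ?thesis
    by (simp add: complex_eq_iff Re_cinner Im_cinner a b)
qed

lemma parallelogram_eq:
  fixes a b :: "'a::real_inner"
  shows "(norm (a - b))\<^sup>2 + (norm (a + b))\<^sup>2 = 2 * (norm a)\<^sup>2 + 2 * (norm b)\<^sup>2"
  by (simp add: power2_norm_eq_inner inner_simps inner_commute)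

lemma proj_exists:
  fixes u :: "'a::{real_inner,complete_space}"
  assumes cl: "closed N" and N0: "0 \<in> N"
    and Nadd: "\<And>a b. a \<in> N \<Longrightarrow> b \<in> N \<Longrightarrow> a + b \<in> N"
    and Nscale: "\<And>c a. a \<in> N \<Longrightarrow> c *\<^sub>R a \<in> N"
  shows "\<exists>n\<in>N. \<forall>m\<in>N. inner (u - n) m = 0"
proof -
  define D where "D = (\<lambda>m. (norm (u - m))\<^sup>2) ` N"
  define \<delta> where "\<delta> = Inf D"
  have ne: "D \<noteq> {}" using N0 D_def by auto
  have bdd: "bdd_below D" unfolding D_def by (rule bdd_belowI[of _ 0]) auto
  have lb: "\<delta> \<le> (norm (u - m))\<^sup>2" if "m \<in> N" for m
    unfolding \<delta>_def using bdd that D_def by (auto intro: cInf_lower)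
  have "\<exists>m\<in>N. (norm (u - m))\<^sup>2 < \<delta> + inverse (real (Suc k))" for k
  proof -
    have "Inf D < \<delta> + inverse (real (Suc k))" unfolding \<delta>_def by simp
    then obtain d where "d \<in> D" "d < \<delta> + inverse (real (Suc k))" using cInf_lessD[OF ne] by blast
    then show ?thesis unfolding D_def by auto
  qed
  then obtain s where sN: "\<And>k. s k \<in> N" and sl: "\<And>k. (norm (u - s k))\<^sup>2 < \<delta> + inverse (real (Suc k))"
    by metis
  have dist: "(norm (s k - s m))\<^sup>2 \<le> 2 * inverse (real (Suc k)) + 2 * inverse (real (Suc m))" for k m
  proof -
    have mid: "(1/2) *\<^sub>R (s k + s m) \<in> N" using sN Nadd Nscale by blast
    have e1: "(u - s m) - (u - s k) = s k - s m" by simp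
    have e2: "(u - s m) + (u - s k) = 2 *\<^sub>R (u - (1/2) *\<^sub>R (s k + s m))"
      by (simp add: algebra_simps scaleR_2)
    have "(norm ((u - s m) + (u - s k)))\<^sup>2 = 4 * (norm (u - (1/2) *\<^sub>R (s k + s m)))\<^sup>2"
      unfolding e2 by (simp add: power2_eq_square)
    moreover have "4 * \<delta> \<le> 4 * (norm (u - (1/2) *\<^sub>R (s k + s m)))\<^sup>2" using lb[OF mid] by simp
    moreover note parallelogram_eq[of "u - s m" "u - s k", unfolded e1]
    moreover note sl[of k] sl[of m]
    ultimately show ?thesis by linarith
  qed
  have "Cauchy s"
  proof (rule CauchyI)
    fix e :: real assume "0 < e"
    then have "0 < e\<^sup>2 / 4" by simp
    then obtain M where M: "inverse (real (Suc M)) < e\<^sup>2 / 4"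
      using reals_Archimedean by blast
    have "norm (s m - s n) < e" if "m \<ge> M" "n \<ge> M" for m n
    proof -
      have "inverse (real (Suc m)) \<le> inverse (real (Suc M))" "inverse (real (Suc n)) \<le> inverse (real (Suc M))"
        using that by (auto simp: field_simps)
      then have "(norm (s m - s n))\<^sup>2 < e\<^sup>2" using dist[of m n] M by linarith
      then show ?thesis using \<open>0 < e\<close> by (simp add: power_less_imp_less_base)
    qed
    then show "\<exists>M. \<forall>m\<ge>M. \<forall>n\<ge>M. norm (s m - s n) < e" by blast
  qed
  then obtain n where lim: "s \<longlonglongrightarrow> n" using Cauchy_convergent_iff convergent_def by blast
  have nN: "n \<in> N" using closed_sequentially[OF cl sN lim] .
  have l1: "(\<lambda>k. (norm (u - s k))\<^sup>2) \<longlonglongrightarrow> (norm (u - n))\<^sup>2"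
    by (intro tendsto_intros lim)
  have l2: "(\<lambda>k. \<delta> + inverse (real (Suc k))) \<longlonglongrightarrow> \<delta> + 0"
    by (intro tendsto_intros LIMSEQ_inverse_real_of_nat)
  have "(norm (u - n))\<^sup>2 \<le> \<delta> + 0"
    by (rule LIMSEQ_le[OF l1 l2], rule exI[of _ 0], intro allI impI, rule less_imp_le, rule sl)
  with lb[OF nN] have nd: "(norm (u - n))\<^sup>2 = \<delta>" by simp
  have "inner (u - n) m = 0" if mN: "m \<in> N" for m
  proof -
    define p where "p = inner (u - n) m"
    define M where "M = (norm m)\<^sup>2"
    define t where "t = p / (M + 1)"
    have M0: "M \<ge> 0" unfolding M_def by simp
    have "n + t *\<^sub>R m \<in> N" using nN mN Nadd Nscale by blast
    from lb[OF this] have "\<delta> \<le> (norm ((u - n) - t *\<^sub>R m))\<^sup>2" by (simp add: algebra_simps)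
    also have "\<dots> = (norm (u - n))\<^sup>2 - 2 * t * p + t * t * M"
      by (simp add: power2_norm_eq_inner inner_simps inner_commute p_def M_def algebra_simps)
    finally have "2 * t * p \<le> t * t * M" using nd by simp
    then have "(M+1)*(M+1)*(2*t*p) \<le> (M+1)*(M+1)*(t*t*M)"
      using M0 by (intro mult_left_mono) auto
    moreover have tp: "t*(M+1) = p" using M0 by (simp add: t_def)
    moreover have "(M+1)*(M+1)*(2*t*p) = 2*p*(M+1)*(t*(M+1))" by (simp add: algebra_simps)
    moreover have "(M+1)*(M+1)*(t*t*M) = (t*(M+1))*(t*(M+1))*M" by (simp add: algebra_simps)
    ultimately have "2 * (p * p) * (M + 1) \<le> (p * p) * M"
      by (simp add: algebra_simps)
    then have "(p * p) * (M + 2) \<le> 0" by (simp add: algebra_simps)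
    moreover have "p * p \<ge> 0" by simp
    ultimately have "p * p = 0" using M0
      by (metis add_nonneg_pos mult_le_0_iff order_antisym_conv zero_less_numeral le_less_trans less_le_not_le)
    then show ?thesis unfolding p_def by simp
  qed
  then show ?thesis using nN by blast
qed

lemma riesz:
  fixes f :: "'a::{real_inner,complete_space} \<Rightarrow> real"
  assumes bl: "bounded_linear f"
  shows "\<exists>z. \<forall>x. f x = inner x z"
proof (cases "\<forall>x. f x = 0")
  case True then show ?thesis by (intro exI[of _ 0]) simp
next
  case False
  then obtain u0 where u0: "f u0 \<noteq> 0" by auto
  interpret f: bounded_linear f by fact
  define u where "u = (1 / f u0) *\<^sub>R u0"
  have fu: "f u = 1" using u0 by (simp add: u_def f.scaleR)
  define N where "N = {x. f x = 0}"
  have cl: "closed N" unfolding N_def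
    by (intro closed_Collect_eq continuous_on_const linear_continuous_on bl)
  have "\<exists>n\<in>N. \<forall>m\<in>N. inner (u - n) m = 0"
    by (rule proj_exists[OF cl]) (auto simp: N_def f.add f.scaleR f.zero)
  then obtain n where nN: "n \<in> N" and orth: "\<And>m. m \<in> N \<Longrightarrow> inner (u - n) m = 0" by blast
  define v where "v = u - n"
  have fv: "f v = 1" using fu nN by (simp add: v_def f.diff N_def)
  then have "v \<noteq> 0" using f.zero by auto
  then have nv: "(norm v)\<^sup>2 \<noteq> 0" by simp
  show ?thesis
  proof (intro exI[of _ "(1 / (norm v)\<^sup>2) *\<^sub>R v"] allI)
    fix x
    have "x - f x *\<^sub>R v \<in> N" using fv by (simp add: N_def f.diff f.scaleR)
    from orth[OF this] have "inner v x = f x * (norm v)\<^sup>2"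
      by (simp add: v_def[symmetric] inner_simps power2_norm_eq_inner)
    then show "f x = inner x ((1 / (norm v)\<^sup>2) *\<^sub>R v)"
      using nv by (simp add: inner_commute field_simps)
  qed
qed

lemma vec_eq_inner:
  fixes a b :: "'a::real_inner"
  assumes "\<And>x. inner x a = inner x b"
  shows "a = b"
proof -
  have "inner (a - b) (a - b) = 0" using assms[of "a - b"] by (simp add: inner_diff_right)
  then show ?thesis by simp
qed

lemma selfadj_bound:
  fixes R :: "'a::real_inner \<Rightarrow> 'a"
  assumes add: "\<And>x y. R (x + y) = R x + R y"
    and scl: "\<And>r x. R (r *\<^sub>R x) = r *\<^sub>R R x"
    and sym: "\<And>x y. inner (R x) y = inner x (R y)"
    and bd: "\<And>z. \<bar>inner (R z) z\<bar> \<le> W * (norm z)\<^sup>2"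
  shows "norm (R x) \<le> W * norm x"
proof -
  have R0: "R 0 = 0" using scl[of 0 0] by simp
  have diff: "R (a - b) = R a - R b" for a b
    using add[of a "(-1) *\<^sub>R b"] scl[of "-1" b] by simp
  have key: "4 * inner (R a) b = inner (R (a + b)) (a + b) - inner (R (a - b)) (a - b)" for a b
  proof -
    have "inner (R b) a = inner (R a) b" using sym[of b a] by (simp add: inner_commute)
    then show ?thesis unfolding add diff by (simp add: inner_simps)
  qed
  have key2: "4 * inner (R a) b \<le> W * (2 * (norm a)\<^sup>2 + 2 * (norm b)\<^sup>2)" for a b
  proof -
    have "inner (R (a + b)) (a + b) \<le> W * (norm (a + b))\<^sup>2" using bd[of "a + b"] by linarith
    moreover have "- inner (R (a - b)) (a - b) \<le> W * (norm (a - b))\<^sup>2" using bd[of "a - b"] by linarith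
    ultimately have "4 * inner (R a) b \<le> W * ((norm (a - b))\<^sup>2 + (norm (a + b))\<^sup>2)"
      unfolding key by (simp add: algebra_simps)
    then show ?thesis unfolding parallelogram_eq .
  qed
  show ?thesis
  proof (cases "x = 0 \<or> R x = 0")
    case True
    show ?thesis
    proof (cases "x = 0")
      case True then show ?thesis using R0 by simp
    next
      case False
      then have "0 < (norm x)\<^sup>2" by simp
      moreover have "0 \<le> W * (norm x)\<^sup>2" using bd[of x] by linarith
      ultimately have "W \<ge> 0" by (simp add: zero_le_mult_iff)
      then show ?thesis using True False by simp
    qed
  next
    case False
    then have nx: "norm x > 0" and nr: "norm (R x) > 0" by auto
    define y where "y = (norm x / norm (R x)) *\<^sub>R R x"
    have ny: "norm y = norm x" using nr by (simp add: y_def)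
    have iy: "inner (R x) y = norm x * norm (R x)"
      using nr by (simp add: y_def power2_norm_eq_inner[symmetric] power2_eq_square)
    from key2[of x y] have "4 * (norm x * norm (R x)) \<le> 4 * (W * norm x * norm x)"
      unfolding iy ny by (simp add: power2_eq_square algebra_simps)
    then have "norm x * norm (R x) \<le> norm x * (W * norm x)" by (simp add: algebra_simps)
    then show ?thesis using nx by (simp add: mult_le_cancel_left_pos)
  qed
qed

lemma onorm_scaleC:
  fixes R :: "'a::complex_hilbert \<Rightarrow> 'a"
  assumes bl: "bounded_linear R"
  shows "onorm (\<lambda>x. scaleC c (R x)) = cmod c * onorm R"
proof -
  interpret R: bounded_linear R by fact
  have blc: "bounded_linear (\<lambda>x. scaleC d (R x))" for d
  proof (rule bounded_linear_intro[where K = "cmod d * onorm R"])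
    show "scaleC d (R (x + y)) = scaleC d (R x) + scaleC d (R y)" for x y
      by (simp add: R.add scaleC_add_right)
    show "scaleC d (R (r *\<^sub>R x)) = r *\<^sub>R scaleC d (R x)" for r x
      by (simp add: R.scaleR scaleC_scaleR_comm)
    show "norm (scaleC d (R x)) \<le> norm x * (cmod d * onorm R)" for x
      using mult_left_mono[OF onorm[OF bl, of x], of "cmod d"] by (simp add: norm_scaleC algebra_simps)
  qed
  have le: "onorm (\<lambda>x. scaleC c (R x)) \<le> cmod c * onorm R"
  proof (rule onorm_bound)
    show "0 \<le> cmod c * onorm R" using onorm_pos_le[OF bl] by simp
    fix x show "norm (scaleC c (R x)) \<le> cmod c * onorm R * norm x"
      using mult_left_mono[OF onorm[OF bl, of x], of "cmod c"] by (simp add: norm_scaleC algebra_simps)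
  qed
  have ge: "cmod c * onorm R \<le> onorm (\<lambda>x. scaleC c (R x))"
  proof (cases "c = 0")
    case True then show ?thesis using onorm_pos_le[OF blc] by simp
  next
    case False
    have "onorm R \<le> onorm (\<lambda>x. scaleC c (R x)) / cmod c"
    proof (rule onorm_bound)
      show "0 \<le> onorm (\<lambda>x. scaleC c (R x)) / cmod c" using onorm_pos_le[OF blc] by simp
      fix x
      have "norm (scaleC c (R x)) \<le> onorm (\<lambda>x. scaleC c (R x)) * norm x"
        using onorm[OF blc[of c]] by simp
      then have "cmod c * norm (R x) \<le> onorm (\<lambda>x. scaleC c (R x)) * norm x"
        by (simp add: norm_scaleC)
      then show "norm (R x) \<le> onorm (\<lambda>x. scaleC c (R x)) / cmod c * norm x"
        using False by (simp add: field_simps)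
    qed
    then show ?thesis using False by (simp add: field_simps)
  qed
  show ?thesis using le ge by simp
qed

lemma sup_sqrt2:
  assumes a: "a \<ge> 0"
  shows "(SUP p \<in> {(\<zeta>, \<eta>). (cmod \<zeta>)\<^sup>2 + (cmod \<eta>)\<^sup>2 \<le> 1}. cmod (fst p + snd p) * a) = sqrt 2 * a"
proof -
  let ?P = "{(\<zeta>::complex, \<eta>::complex). (cmod \<zeta>)\<^sup>2 + (cmod \<eta>)\<^sup>2 \<le> 1}"
  have bd: "cmod (fst p + snd p) \<le> sqrt 2" if pP: "p \<in> ?P" for p
  proof -
    obtain z e where p: "p = (z, e)" and ze: "(cmod z)\<^sup>2 + (cmod e)\<^sup>2 \<le> 1" by (cases p) (use pP in auto)
    have "(cmod z + cmod e)\<^sup>2 \<le> 2 * ((cmod z)\<^sup>2 + (cmod e)\<^sup>2)"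
      using sum_squares_ge_zero[of "cmod z - cmod e" 0]
      by (simp add: power2_eq_square algebra_simps)
    also have "\<dots> \<le> 2" using ze by simp
    finally have "cmod z + cmod e \<le> sqrt 2" by (rule real_le_rsqrt)
    then show ?thesis using norm_triangle_ineq[of z e] p by simp
  qed
  have ne: "?P \<noteq> {}" proof - have "(0,0) \<in> ?P" by simp then show ?thesis by blast qed
  have bdd: "bdd_above ((\<lambda>p. cmod (fst p + snd p) * a) ` ?P)"
    by (rule bdd_aboveI[of _ "sqrt 2 * a"]) (use bd a in \<open>auto intro: mult_right_mono\<close>)
  define h where "h = complex_of_real (1 / sqrt 2)"
  have ch: "cmod h = 1 / sqrt 2" unfolding h_def norm_of_real by simp
  have hP: "(h, h) \<in> ?P" using ch by (simp add: power_divide)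
  have hv: "cmod (fst (h, h) + snd (h, h)) = sqrt 2"
  proof -
    have "h + h = complex_of_real (2 / sqrt 2)" by (simp add: h_def)
    also have "2 / sqrt 2 = sqrt 2" by (simp add: real_div_sqrt)
    finally show ?thesis by simp
  qed
  have "sqrt 2 * a \<le> (SUP p \<in> ?P. cmod (fst p + snd p) * a)"
    using cSUP_upper[OF hP bdd] hv by simp
  moreover have "(SUP p \<in> ?P. cmod (fst p + snd p) * a) \<le> sqrt 2 * a"
    by (rule cSUP_least[OF ne]) (use bd a in \<open>auto intro: mult_right_mono\<close>)
  ultimately show ?thesis by simp
qed

lemma bop_add: "bounded_op T \<Longrightarrow> T (x + y) = T x + T y"
  by (simp add: bounded_op_def)
lemma bop_scaleC: "bounded_op T \<Longrightarrow> T (scaleC c x) = scaleC c (T x)"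
  by (simp add: bounded_op_def)
lemma bop_scaleR: "bounded_op T \<Longrightarrow> T (r *\<^sub>R x) = r *\<^sub>R T x"
  by (metis bop_scaleC scaleC_of_real)
lemma bop_bl: assumes "bounded_op T" shows "bounded_linear T"
proof -
  obtain K where K: "\<And>x. norm (T x) \<le> K * norm x" using assms by (auto simp: bounded_op_def)
  show ?thesis
    by (rule bounded_linear_intro[where K = K]) (use assms K in \<open>auto simp: bop_add bop_scaleR mult.commute\<close>)
qed

lemma adjoint_exists:
  assumes A: "bounded_op A"
  shows "\<exists>S. \<forall>x y. cinner (A x) y = cinner x (S y)"
proof -
  have "\<exists>z. \<forall>x. inner (A x) y = inner x z" for y
    by (rule riesz) (intro bounded_linear_compose[OF bounded_linear_inner_left bop_bl[OF A]])
  then obtain S where S: "\<And>x y. inner (A x) y = inner x (S y)" by metis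
  have "cinner (A x) y = cinner x (S y)" for x y
  proof -
    have "inner (A x) (scaleC \<i> y) = - inner (scaleC \<i> (A x)) y" by (simp add: inner_i_left)
    also have "\<dots> = - inner (scaleC \<i> x) (S y)" by (simp add: bop_scaleC[OF A, symmetric] S)
    also have "\<dots> = inner x (scaleC \<i> (S y))" by (simp add: inner_i_left)
    finally show ?thesis by (simp add: complex_eq_iff Re_cinner Im_cinner S)
  qed
  then show ?thesis by blast
qed

lemma hadjoint_eq:
  assumes A: "bounded_op A"
  shows "cinner (A x) y = cinner x (hadjoint A y)"
proof -
  have "\<forall>x y. cinner (A x) y = cinner x (hadjoint A y)"
    unfolding hadjoint_def using someI_ex[OF adjoint_exists[OF A]] .
  then show ?thesis by blast
qed

lemma hadjoint_re: "bounded_op A \<Longrightarrow> inner (A x) y = inner x (hadjoint A y)"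
  by (metis Re_cinner hadjoint_eq)
lemma hadjoint_im: "bounded_op A \<Longrightarrow> inner (A x) (scaleC \<i> y) = inner x (scaleC \<i> (hadjoint A y))"
  by (metis Im_cinner hadjoint_eq)

lemma ReOp_eq: "ReOp A x = (1/2) *\<^sub>R (A x + hadjoint A x)"
  unfolding ReOp_def using scaleC_of_real[of "1/2"] by simp

lemma hadjoint_lin:
  assumes A: "bounded_op A"
  shows "hadjoint A (a + b) = hadjoint A a + hadjoint A b"
    and "hadjoint A (scaleC c a) = scaleC c (hadjoint A a)"
proof -
  let ?S = "hadjoint A"
  show "?S (a + b) = ?S a + ?S b"
    by (rule vec_eq_inner) (simp add: hadjoint_re[OF A, symmetric] inner_add_right)
  have sr: "?S (r *\<^sub>R a) = r *\<^sub>R ?S a" for r a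
    by (rule vec_eq_inner) (simp add: hadjoint_re[OF A, symmetric])
  have si: "?S (scaleC \<i> a) = scaleC \<i> (?S a)"
    by (rule vec_eq_inner) (simp add: hadjoint_re[OF A, symmetric] hadjoint_im[OF A])
  have "?S (scaleC c a) = ?S (Re c *\<^sub>R a + Im c *\<^sub>R scaleC \<i> a)" by (simp only: scaleC_decomp[of c a])
  also have "\<dots> = Re c *\<^sub>R ?S a + Im c *\<^sub>R scaleC \<i> (?S a)"
    by (rule vec_eq_inner) (simp add: hadjoint_re[OF A, symmetric] hadjoint_im[OF A] inner_add_right bop_add[OF A])
  also have "\<dots> = scaleC c (?S a)" by (simp only: scaleC_decomp[of c "?S a"])
  finally show "?S (scaleC c a) = scaleC c (?S a)" .
qed

lemma ReOp_add: "bounded_op A \<Longrightarrow> ReOp A (x + y) = ReOp A x + ReOp A y"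
  by (simp add: ReOp_eq bop_add hadjoint_lin algebra_simps)
lemma ReOp_scaleC: "bounded_op A \<Longrightarrow> ReOp A (scaleC c x) = scaleC c (ReOp A x)"
  by (simp add: ReOp_eq bop_scaleC hadjoint_lin scaleC_add_right scaleC_scaleR_comm)
lemma ReOp_scaleR: "bounded_op A \<Longrightarrow> ReOp A (r *\<^sub>R x) = r *\<^sub>R ReOp A x"
  by (metis ReOp_scaleC scaleC_of_real)
lemma ReOp_sym: "bounded_op A \<Longrightarrow> inner (ReOp A x) y = inner x (ReOp A y)"
proof -
  assume A: "bounded_op A"
  have "inner (hadjoint A x) y = inner x (A y)"
    using hadjoint_re[OF A, of y x] by (simp add: inner_commute)
  then show ?thesis
    by (simp add: ReOp_eq inner_add_left inner_add_right hadjoint_re[OF A])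
qed
lemma ReOp_diag: "bounded_op A \<Longrightarrow> inner (ReOp A x) x = inner (A x) x"
proof -
  assume A: "bounded_op A"
  have "inner (hadjoint A x) x = inner (A x) x"
    using hadjoint_re[OF A, of x x] by (simp add: inner_commute)
  then show ?thesis by (simp add: ReOp_eq inner_add_left)
qed

lemma ReOp_selfadj:
  assumes A: "bounded_op A" and bl: "bounded_linear (ReOp A)"
  shows "hadjoint (ReOp A) = ReOp A"
proof -
  let ?R = "ReOp A"
  have bR: "bounded_op ?R"
  proof -
    interpret bounded_linear ?R by fact
    obtain K where "\<And>x. norm (?R x) \<le> norm x * K" using bounded by blast
    then show ?thesis unfolding bounded_op_def
      using ReOp_add[OF A] ReOp_scaleC[OF A] by (metis mult.commute)
  qed
  show ?thesis
  proof
    fix y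
    show "hadjoint ?R y = ?R y"
    proof (rule vec_eq_inner)
      fix x
      show "inner x (hadjoint ?R y) = inner x (?R y)"
        using hadjoint_re[OF bR, of x y] ReOp_sym[OF A, of x y] by simp
    qed
  qed
qed

lemma numrad_facts:
  assumes T: "bounded_op T"
  shows numrad_upper: "norm x = 1 \<Longrightarrow> cmod (cinner (T x) x) \<le> numrad T"
    and numrad_nonneg: "0 \<le> numrad T"
    and numrad_least: "0 \<le> B \<Longrightarrow> (\<And>x. norm x = 1 \<Longrightarrow> cmod (cinner (T x) x) \<le> B) \<Longrightarrow> numrad T \<le> B"
proof -
  obtain K where K: "\<And>x. norm (T x) \<le> K * norm x" using T by (auto simp: bounded_op_def)
  let ?S = "insert 0 ((\<lambda>x. cmod (cinner (T x) x)) ` {x. norm x = 1})"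
  have bdd: "bdd_above ?S"
  proof (rule bdd_aboveI[of _ "max 0 K"])
    fix s assume "s \<in> ?S"
    then show "s \<le> max 0 K"
    proof
      assume "s = 0" then show ?thesis by simp
    next
      assume "s \<in> (\<lambda>x. cmod (cinner (T x) x)) ` {x. norm x = 1}"
      then obtain x where x: "norm x = 1" "s = cmod (cinner (T x) x)" by auto
      have "s \<le> norm (T x) * norm x" using x cinner_cmod_le[of "T x" x] by simp
      also have "\<dots> \<le> K" using K[of x] x by simp
      finally show ?thesis by simp
    qed
  qed
  show "norm x = 1 \<Longrightarrow> cmod (cinner (T x) x) \<le> numrad T"
    unfolding numrad_def by (rule cSup_upper[OF _ bdd]) auto
  show "0 \<le> numrad T"
    unfolding numrad_def by (rule cSup_upper[OF _ bdd]) auto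
  show "0 \<le> B \<Longrightarrow> (\<And>x. norm x = 1 \<Longrightarrow> cmod (cinner (T x) x) \<le> B) \<Longrightarrow> numrad T \<le> B"
    unfolding numrad_def by (rule cSup_least) auto
qed

lemma cinner_scaleR_both: "cinner (a *\<^sub>R x) (b *\<^sub>R y) = complex_of_real (a * b) * cinner x (y::'a::complex_hilbert)"
  by (simp add: complex_eq_iff Re_cinner Im_cinner scaleC_scaleR_comm)

lemma numrad_gen:
  assumes T: "bounded_op T"
  shows "cmod (cinner (T z) z) \<le> numrad T * (norm z)\<^sup>2"
proof (cases "z = 0")
  case True
  then show ?thesis by (simp add: cinner_def)
next
  case False
  define u where "u = (1 / norm z) *\<^sub>R z"
  have nu: "norm u = 1" using False by (simp add: u_def)
  have "cinner (T u) u = complex_of_real (1 / (norm z)\<^sup>2) * cinner (T z) z"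
    by (simp add: u_def bop_scaleR[OF T] cinner_scaleR_both power2_eq_square)
  then have "cmod (cinner (T u) u) = cmod (cinner (T z) z) / (norm z)\<^sup>2"
    by (simp add: norm_mult norm_divide norm_power)
  with numrad_upper[OF T nu] have "cmod (cinner (T z) z) / (norm z)\<^sup>2 \<le> numrad T" by simp
  then show ?thesis using False by (simp add: field_simps)
qed

theorem proposition3p1:
  fixes T :: "'a::complex_hilbert \<Rightarrow> 'a"
  assumes "bounded_op T"
  shows "w_Omega T = sqrt 2 * numrad T"
proof -
  have T: "bounded_op T" by fact
  define A where "A \<theta> = (\<lambda>x. scaleC (exp (\<i> * complex_of_real \<theta>)) (T x))" for \<theta>
  define g where "g \<theta> = onorm (ReOp (A \<theta>))" for \<theta>
  define W where "W = numrad T"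
  have W0: "0 \<le> W" using numrad_nonneg[OF T] W_def by simp
  have cexp: "cmod (exp (\<i> * complex_of_real \<theta>)) = 1" for \<theta>
    by (simp add: norm_exp_i_times)
  have bA: "bounded_op (A \<theta>)" for \<theta>
  proof -
    obtain K where K: "\<And>x. norm (T x) \<le> K * norm x" using T by (auto simp: bounded_op_def)
    show ?thesis unfolding bounded_op_def A_def
      using K by (auto simp: bop_add[OF T] bop_scaleC[OF T] scaleC_add_right scaleC_scaleC
          mult.commute norm_scaleC cexp)
  qed
  have Ainner: "cinner (A \<theta> z) z = exp (\<i> * complex_of_real \<theta>) * cinner (T z) z" for \<theta> z
    by (simp add: A_def cinner_scaleC_left)
  have Rbd: "norm (ReOp (A \<theta>) x) \<le> W * norm x" for \<theta> x
  proof (rule selfadj_bound)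
    show "ReOp (A \<theta>) (x + y) = ReOp (A \<theta>) x + ReOp (A \<theta>) y" for x y by (rule ReOp_add[OF bA])
    show "ReOp (A \<theta>) (r *\<^sub>R x) = r *\<^sub>R ReOp (A \<theta>) x" for r x by (rule ReOp_scaleR[OF bA])
    show "inner (ReOp (A \<theta>) x) y = inner x (ReOp (A \<theta>) y)" for x y by (rule ReOp_sym[OF bA])
    fix z
    have "\<bar>inner (ReOp (A \<theta>) z) z\<bar> = \<bar>Re (cinner (A \<theta> z) z)\<bar>"
      by (simp add: ReOp_diag[OF bA] Re_cinner)
    also have "\<dots> \<le> cmod (cinner (A \<theta> z) z)" by (rule abs_Re_le_cmod)
    also have "\<dots> = cmod (cinner (T z) z)" by (simp add: Ainner norm_mult cexp)
    also have "\<dots> \<le> W * (norm z)\<^sup>2" using numrad_gen[OF T] W_def by simp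
    finally show "\<bar>inner (ReOp (A \<theta>) z) z\<bar> \<le> W * (norm z)\<^sup>2" .
  qed
  have blR: "bounded_linear (ReOp (A \<theta>))" for \<theta>
    by (rule bounded_linear_intro[where K = W])
       (use Rbd in \<open>auto simp: ReOp_add[OF bA] ReOp_scaleR[OF bA] mult.commute\<close>)
  have gW: "g \<theta> \<le> W" for \<theta>
    unfolding g_def by (rule onorm_bound[OF W0 Rbd])
  have g0: "0 \<le> g \<theta>" for \<theta>
    unfolding g_def by (rule onorm_pos_le[OF blR])
  have dr: "dragomir (ReOp (A \<theta>)) = sqrt 2 * g \<theta>" for \<theta>
  proof -
    have "dragomir (ReOp (A \<theta>)) = (SUP p \<in> {(\<zeta>, \<eta>). (cmod \<zeta>)\<^sup>2 + (cmod \<eta>)\<^sup>2 \<le> 1}.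
        onorm (\<lambda>x. scaleC (fst p + snd p) (ReOp (A \<theta>) x)))"
      unfolding dragomir_def ReOp_selfadj[OF bA blR] by (simp add: scaleC_add_left)
    also have "\<dots> = (SUP p \<in> {(\<zeta>, \<eta>). (cmod \<zeta>)\<^sup>2 + (cmod \<eta>)\<^sup>2 \<le> 1}. cmod (fst p + snd p) * g \<theta>)"
      by (simp add: onorm_scaleC[OF blR] g_def)
    also have "\<dots> = sqrt 2 * g \<theta>" by (rule sup_sqrt2[OF g0])
    finally show ?thesis .
  qed
  have wo: "w_Omega T = (SUP \<theta>. sqrt 2 * g \<theta>)"
    unfolding w_Omega_def A_def[symmetric] dr ..
  have lower: "\<exists>\<theta>. cmod (cinner (T x) x) \<le> g \<theta>" if nx: "norm x = 1" for x
  proof (cases "cinner (T x) x = 0")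
    case True then show ?thesis using g0 by auto
  next
    case False
    define c where "c = cinner (T x) x"
    have c0: "c \<noteq> 0" using False c_def by simp
    define \<theta> where "\<theta> = - Arg c"
    have e1: "exp (\<i> * complex_of_real \<theta>) * exp (\<i> * complex_of_real (Arg c)) = 1"
      by (simp add: \<theta>_def exp_add[symmetric])
    have "exp (\<i> * complex_of_real \<theta>) * c
        = complex_of_real (cmod c) * (exp (\<i> * complex_of_real \<theta>) * exp (\<i> * complex_of_real (Arg c)))"
      by (subst Arg_eq[OF c0]) (simp add: algebra_simps)
    then have ec: "exp (\<i> * complex_of_real \<theta>) * c = complex_of_real (cmod c)" using e1 by simp
    have "inner (ReOp (A \<theta>) x) x = Re (cinner (A \<theta> x) x)"
      by (simp add: ReOp_diag[OF bA] Re_cinner)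
    also have "\<dots> = cmod c" by (simp add: Ainner c_def[symmetric] ec)
    finally have "cmod c = inner (ReOp (A \<theta>) x) x" by simp
    also have "\<dots> \<le> norm (ReOp (A \<theta>) x) * norm x" by (rule norm_cauchy_schwarz)
    also have "\<dots> \<le> g \<theta>" using onorm[OF blR, of \<theta> x] nx by (simp add: g_def)
    finally show ?thesis unfolding c_def by blast
  qed
  have bdd: "bdd_above (range (\<lambda>\<theta>. sqrt 2 * g \<theta>))"
    by (rule bdd_aboveI[of _ "sqrt 2 * W"]) (auto intro: mult_left_mono gW)
  have up: "(SUP \<theta>. sqrt 2 * g \<theta>) \<le> sqrt 2 * W"
    by (rule cSUP_least) (auto intro: mult_left_mono gW)
  define Sp where "Sp = (SUP \<theta>. sqrt 2 * g \<theta>)"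
  have gS: "sqrt 2 * g \<theta> \<le> Sp" for \<theta> unfolding Sp_def by (rule cSUP_upper[OF _ bdd]) simp
  have "W \<le> Sp / sqrt 2"
    unfolding W_def
  proof (rule numrad_least[OF T])
    have "0 \<le> sqrt 2 * g 0" using g0[of 0] by simp
    then have "0 \<le> Sp" using gS[of 0] by linarith
    then show "0 \<le> Sp / sqrt 2" by simp
    fix x :: 'a assume "norm x = 1"
    then obtain \<theta> where "cmod (cinner (T x) x) \<le> g \<theta>" using lower by blast
    also have "g \<theta> \<le> Sp / sqrt 2" using gS[of \<theta>] by (simp add: field_simps)
    finally show "cmod (cinner (T x) x) \<le> Sp / sqrt 2" .
  qed
  then have "sqrt 2 * W \<le> Sp" by (simp add: field_simps)
  then show ?thesis using up wo W_def Sp_def by simp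
qed

end
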